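(* Let $n\ge 2$ and let $\Delta=\{(p_1,\ldots,p_n)\in\mathbb{R}^n : \sum_{i=1}^n p_i=1,\ p_i\ge 0\ \forall i\}$ be the probability simplex, with $\mathbf{e}_j$ ($j=1,\ldots,n$) the standard basis vectors (the point-mass PMFs). Let $\mathbf{p},\mathbf{p}'\in\Delta$. Then there exist $\mathbf{q}=(q_1,\ldots,q_n)\in\Delta$ and an index set $J\subset\{1,\ldots,n\}$ with $|J|=n-1$, $J=\{j_1,\ldots,j_{n-1}\}$, such that $$\mathbf{p}'=q_1\mathbf{p}+\sum_{i=1}^{n-1}q_{i+1}\mathbf{e}_{j_i}.$$ Moreover, if $\mathbf{p}'$ is an interior point of $\Delta$ (all entries strictly positive), then $q_1>0$. *)

theory Defs
  imports Main Complex_Main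
begin

text \<open>Points of R^n are represented as functions nat => real, indexed by 1..n
 (values outside 1..n are irrelevant).\<close>

definition prob_simplex :: "nat \<Rightarrow> (nat \<Rightarrow> real) set" where
  "prob_simplex n = {p. (\<forall>i\<in>{1..n}. p i \<ge> 0) \<and> (\<Sum>i=1..n. p i) = 1}"

definition std_basis :: "nat \<Rightarrow> nat \<Rightarrow> real" where
  "std_basis j = (\<lambda>k. if k = j then 1 else 0)"

end

theory Submission
  imports Defs
begin

theorem lemma1:
  fixes n :: nat and p p' :: "nat \<Rightarrow> real"
  assumes "n \<ge> 2"
    and "p \<in> prob_simplex n"
    and "p' \<in> prob_simplex n"
  shows "\<exists>q J j. q \<in> prob_simplex n \<and> J \<subseteq> {1..n} \<and> card J = n - 1
           \<and> bij_betw j {1..n-1} J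
           \<and> (\<forall>k\<in>{1..n}. p' k = q 1 * p k + (\<Sum>i=1..n-1. q (i+1) * std_basis (j i) k))
           \<and> ((\<forall>k\<in>{1..n}. p' k > 0) \<longrightarrow> q 1 > 0)"
proof -
  have p0: "\<forall>i\<in>{1..n}. p i \<ge> 0" and p1: "(\<Sum>i=1..n. p i) = 1"
    using assms(2) by (auto simp: prob_simplex_def)
  have p'0: "\<forall>i\<in>{1..n}. p' i \<ge> 0" and p'1: "(\<Sum>i=1..n. p' i) = 1"
    using assms(3) by (auto simp: prob_simplex_def)
  define S where "S = {k\<in>{1..n}. p k > 0}"
  have finS: "finite S" by (simp add: S_def)
  have SS: "S \<subseteq> {1..n}" by (auto simp: S_def)
  have sumpS: "(\<Sum>i\<in>S. p i) = 1"
  proof -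
    have "(\<Sum>i\<in>S. p i) = (\<Sum>i=1..n. p i)"
      by (rule sum.mono_neutral_left) (use p0 in \<open>auto simp: S_def\<close>)
    thus ?thesis using p1 by simp
  qed
  have Sne: "S \<noteq> {}" using sumpS by auto
  define f where "f k = p' k / p k" for k
  define t where "t = Min (f ` S)"
  have "t \<in> f ` S" unfolding t_def using finS Sne by (intro Min_in) auto
  then obtain m where mS: "m \<in> S" and fm: "f m = t" by auto
  have tle: "\<And>k. k \<in> S \<Longrightarrow> t \<le> f k" unfolding t_def using finS by auto
  have dif: "\<And>k. k \<in> {1..n} \<Longrightarrow> t * p k \<le> p' k"
  proof -
    fix k assume k: "k \<in> {1..n}"
    show "t * p k \<le> p' k"
    proof (cases "k \<in> S")
      case True
      hence "p k > 0" by (simp add: S_def)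
      with tle[OF True] show ?thesis by (simp add: f_def pos_le_divide_eq mult.commute)
    next
      case False
      with k p0 have "p k = 0" by (force simp: S_def)
      with k p'0 show ?thesis by simp
    qed
  qed
  have pm: "p m > 0" and m1n: "m \<in> {1..n}" using mS by (auto simp: S_def)
  have pmt: "p' m = t * p m" using fm pm by (auto simp: f_def field_simps)
  have t0: "t \<ge> 0"
  proof -
    have "0 \<le> p' m" using p'0 m1n by blast
    hence "0 \<le> t * p m" using pmt by simp
    thus ?thesis using pm by (simp add: zero_le_mult_iff)
  qed
  have t1: "t \<le> 1"
  proof (rule ccontr)
    assume "\<not> t \<le> 1"
    hence "\<forall>k\<in>S. p k < p' k"
    proof (intro ballI)
      fix k assume kS: "k \<in> S" and "\<not> t \<le> 1"
      hence "1 < f k" using tle[OF kS] by linarith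
      moreover have "p k > 0" using kS by (simp add: S_def)
      ultimately show "p k < p' k" by (simp add: f_def pos_less_divide_eq)
    qed
    hence "(\<Sum>i\<in>S. p i) < (\<Sum>i\<in>S. p' i)" using finS Sne by (intro sum_strict_mono) auto
    also have "\<dots> \<le> (\<Sum>i=1..n. p' i)" using SS p'0 by (intro sum_mono2) auto
    finally show False using sumpS p'1 by simp
  qed
  define J where "J = {1..n} - {m}"
  define j where "j i = (if i < m then i else i + 1)" for i :: nat
  define q where "q i = (if i = 1 then t else p' (j (i-1)) - t * p (j (i-1)))" for i
  have bij: "bij_betw j {1..n-1} J"
  proof (rule bij_betw_imageI)
    show "inj_on j {1..n-1}" unfolding inj_on_def j_def by auto
    show "j ` {1..n-1} = J"
    proof
      show "j ` {1..n - 1} \<subseteq> J" using m1n by (auto simp: j_def J_def)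
      show "J \<subseteq> j ` {1..n - 1}"
      proof
        fix x assume x: "x \<in> J"
        show "x \<in> j ` {1..n - 1}"
        proof (cases "x < m")
          case True
          with x m1n show ?thesis by (auto simp: J_def j_def image_iff intro!: bexI[of _ x])
        next
          case False
          with x m1n have "x > m" "x \<le> n" by (auto simp: J_def)
          thus ?thesis using m1n by (auto simp: j_def image_iff intro!: bexI[of _ "x - 1"])
        qed
      qed
    qed
  qed
  have finJ: "finite J" by (simp add: J_def)
  have reidx: "\<And>g. (\<Sum>i=1..n-1. g (j i)) = (\<Sum>x\<in>J. g x)"
    using bij by (rule sum.reindex_bij_betw)
  have qshift: "\<And>i. i \<ge> 1 \<Longrightarrow> q (Suc i) = p' (j i) - t * p (j i)"
    by (simp add: q_def)
  have q1: "q 1 = t" by (simp add: q_def)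
  have sumq2: "\<And>g. (\<Sum>i=1..n-1. q (i+1) * g (j i)) = (\<Sum>x\<in>J. (p' x - t * p x) * g x)"
  proof -
    fix g
    have "(\<Sum>i=1..n-1. q (i+1) * g (j i)) = (\<Sum>i=1..n-1. (p' (j i) - t * p (j i)) * g (j i))"
      by (rule sum.cong) (auto simp: qshift)
    also have "\<dots> = (\<Sum>x\<in>J. (p' x - t * p x) * g x)"
      by (rule reidx)
    finally show "(\<Sum>i=1..n-1. q (i+1) * g (j i)) = (\<Sum>x\<in>J. (p' x - t * p x) * g x)" .
  qed
  have eq: "\<forall>k\<in>{1..n}. p' k = q 1 * p k + (\<Sum>i=1..n-1. q (i+1) * std_basis (j i) k)"
  proof
    fix k assume k: "k \<in> {1..n}"
    have "(\<Sum>i=1..n-1. q (i+1) * std_basis (j i) k) = (\<Sum>x\<in>J. (p' x - t * p x) * (if k = x then 1 else 0))"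
      using sumq2[of "\<lambda>x. std_basis x k"] by (simp add: std_basis_def)
    also have "\<dots> = (\<Sum>x\<in>J. if x = k then p' x - t * p x else 0)"
      by (rule sum.cong) auto
    also have "\<dots> = (if k \<in> J then p' k - t * p k else 0)"
      using finJ by (rule sum.delta)
    finally show "p' k = q 1 * p k + (\<Sum>i=1..n-1. q (i+1) * std_basis (j i) k)"
      using k pmt q1 by (auto simp: J_def)
  qed
  have "q \<in> prob_simplex n"
  proof -
    have nonneg: "\<forall>i\<in>{1..n}. q i \<ge> 0"
    proof
      fix i assume i: "i \<in> {1..n}"
      show "q i \<ge> 0"
      proof (cases "i = 1")
        case True thus ?thesis using t0 by (simp add: q_def)
      next
        case False
        hence "i - 1 \<in> {1..n-1}" using i by auto
        hence "j (i-1) \<in> J" by (rule bij_betw_apply[OF bij])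
        hence "j (i-1) \<in> {1..n}" by (auto simp: J_def)
        thus ?thesis using False dif by (simp add: q_def)
      qed
    qed
    have "(\<Sum>i=1..n. q i) = q 1 + (\<Sum>i=Suc 1..n. q i)"
      using assms(1) by (intro sum.atLeast_Suc_atMost) simp
    also have "(\<Sum>i=Suc 1..n. q i) = (\<Sum>i=1..n-1. q (i+1))"
      using assms(1) sum.shift_bounds_cl_Suc_ivl[of q 1 "n-1"] by simp
    also have "\<dots> = (\<Sum>x\<in>J. (p' x - t * p x) * 1)"
      using sumq2[of "\<lambda>_. 1"] by simp
    also have "\<dots> = (\<Sum>x\<in>J. p' x) - t * (\<Sum>x\<in>J. p x)"
      by (simp add: sum_subtractf sum_distrib_left)
    also have "(\<Sum>x\<in>J. p' x) = 1 - p' m"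
      using p'1 sum.remove[of "{1..n}" m p'] m1n by (simp add: J_def)
    also have "(\<Sum>x\<in>J. p x) = 1 - p m"
      using p1 sum.remove[of "{1..n}" m p] m1n by (simp add: J_def)
    finally have "(\<Sum>i=1..n. q i) = 1"
      using pmt q1 by (simp add: algebra_simps)
    thus ?thesis using nonneg by (simp add: prob_simplex_def)
  qed
  moreover have "J \<subseteq> {1..n}" by (auto simp: J_def)
  moreover have "card J = n - 1" using m1n by (simp add: J_def)
  moreover have "(\<forall>k\<in>{1..n}. p' k > 0) \<longrightarrow> q 1 > 0"
  proof
    assume "\<forall>k\<in>{1..n}. p' k > 0"
    hence "p' m > 0" using m1n by auto
    hence "t * p m > 0" using pmt by simp
    hence "t > 0" using pm by (simp add: zero_less_mult_iff)
    thus "q 1 > 0" using q1 by simp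
  qed
  ultimately show ?thesis using bij eq by blast
qed

end
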